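(* Let $\Lambda$ be a finitely aligned left cancellative small category. Suppose $\alpha,\beta\in\Lambda$ with $s(\alpha)=s(\beta)$ and $\alpha\beta^*\in S_\Lambda^{\mathrm{Iso}}$, and that $\delta\in\Lambda$ satisfies $\delta\Lambda\subseteq\alpha\Lambda\cap\beta\Lambda$. Then $\delta^*\alpha\beta^*\delta=\bigcup_{i=1}^n\delta_i\alpha_i^*$ for some $\delta_i,\alpha_i\in\Lambda$ such that $\{\delta_i\}_{i=1}^n$ and $\{\alpha_i\}_{i=1}^n$ are exhaustive, and hence $\delta^*\alpha\beta^*\delta\in F_\Lambda$.
   Context: $\Lambda$ is a left cancellative small category (objects $\Lambda^0$, range $r$, source $s$), finitely aligned (each $\alpha\Lambda\cap\beta\Lambda$ is a finite union of $f\Lambda$'s, $\alpha\Lambda=\{\alpha\beta:s(\alpha)=r(\beta)\}$). Each $\alpha\in\Lambda$ is the partial bijection $s(\alpha)\Lambda\to\alpha\Lambda$, $\beta\mapsto\alpha\beta$, in the symmetric inverse monoid $\mathcal{I}(\Lambda)$, with inverse $\alpha^*$; $S_\Lambda$ is the inverse semigroup they generate; $\bigcup$ is union of partial maps. $S_\Lambda^{\mathrm{Iso}}=\{s:ses^*e\neq0\text{ for every idempotent }0\neq e\leqslant s^*s\}$. For $x\in\Lambda^0$, $B\subseteq x\Lambda$ is exhaustive (at $x$) if every $\alpha\in x\Lambda$ has $\alpha\Lambda\cap\beta\Lambda\neq\emptyset$ for some $\beta\in B$. $F_\Lambda=\{\bigcup_{i=1}^n\alpha_i\beta_i^*\in S_\Lambda^{\mathrm{Iso}}:\alpha_i,\beta_i\in\Lambda,\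 \{\alpha_i\},\{\beta_i\}\text{ exhaustive}\}\cup\{0\}$. *)

theory Defs
  imports Main
begin

text \<open>A small category is given by its set of morphisms, its set of objects
(identified with the identity morphisms), range, source and composition.
cmp C a b is the composite a b, defined (meaningful) when sc C a = rg C b.\<close>

record 'a cat =
  Mor :: "'a set"
  Obj :: "'a set"
  rg  :: "'a \<Rightarrow> 'a"
  sc  :: "'a \<Rightarrow> 'a"
  cmp :: "'a \<Rightarrow> 'a \<Rightarrow> 'a"

definition small_category :: "'a cat \<Rightarrow> bool" where
  "small_category C \<longleftrightarrow>
     Obj C \<subseteq> Mor C \<and>
     (\<forall>a\<in>Mor C. rg C a \<in> Obj C \<and> sc C a \<in> Obj C) \<and>
     (\<forall>x\<in>Obj C. rg C x = x \<and> sc C x = x) \<and>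
     (\<forall>a\<in>Mor C. \<forall>b\<in>Mor C. sc C a = rg C b \<longrightarrow>
        cmp C a b \<in> Mor C \<and> rg C (cmp C a b) = rg C a \<and> sc C (cmp C a b) = sc C b) \<and>
     (\<forall>a\<in>Mor C. cmp C (rg C a) a = a \<and> cmp C a (sc C a) = a) \<and>
     (\<forall>a\<in>Mor C. \<forall>b\<in>Mor C. \<forall>c\<in>Mor C. sc C a = rg C b \<longrightarrow> sc C b = rg C c \<longrightarrow>
        cmp C (cmp C a b) c = cmp C a (cmp C b c))"

definition left_cancellative :: "'a cat \<Rightarrow> bool" where
  "left_cancellative C \<longleftrightarrow>
     (\<forall>a\<in>Mor C. \<forall>b\<in>Mor C. \<forall>c\<in>Mor C. sc C a = rg C b \<longrightarrow> sc C a = rg C c \<longrightarrow>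
        cmp C a b = cmp C a c \<longrightarrow> b = c)"

definition rideal :: "'a cat \<Rightarrow> 'a \<Rightarrow> 'a set" where
  "rideal C a = {cmp C a b | b. b \<in> Mor C \<and> sc C a = rg C b}"

definition finitely_aligned :: "'a cat \<Rightarrow> bool" where
  "finitely_aligned C \<longleftrightarrow>
     (\<forall>a\<in>Mor C. \<forall>b\<in>Mor C. \<exists>F. finite F \<and> F \<subseteq> Mor C \<and>
        rideal C a \<inter> rideal C b = (\<Union>f\<in>F. rideal C f))"

text \<open>Partial bijections are partial maps; the product s t of partial maps
is the composition the map composition (apply t first).\<close>

definition pmap :: "'a cat \<Rightarrow> 'a \<Rightarrow> ('a \<rightharpoonup> 'a)" where
  "pmap C a = (\<lambda>g. if g \<in> Mor C \<and> rg C g = sc C a then Some (cmp C a g) else None)"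

definition pinv :: "('a \<rightharpoonup> 'a) \<Rightarrow> ('a \<rightharpoonup> 'a)" where
  "pinv m = (\<lambda>y. if \<exists>x. m x = Some y then Some (SOME x. m x = Some y) else None)"

inductive_set S_Lambda :: "'a cat \<Rightarrow> ('a \<rightharpoonup> 'a) set" for C where
  gen: "a \<in> Mor C \<Longrightarrow> pmap C a \<in> S_Lambda C"
| mult: "s \<in> S_Lambda C \<Longrightarrow> t \<in> S_Lambda C \<Longrightarrow> (s \<circ>\<^sub>m t) \<in> S_Lambda C"
| inv: "s \<in> S_Lambda C \<Longrightarrow> pinv s \<in> S_Lambda C"

definition S_Iso :: "'a cat \<Rightarrow> ('a \<rightharpoonup> 'a) set" where
  "S_Iso C = {s \<in> S_Lambda C. \<forall>e. e \<in> S_Lambda C \<and> e \<circ>\<^sub>m e = e \<and> e \<noteq> Map.empty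
       \<and> e = e \<circ>\<^sub>m (pinv s \<circ>\<^sub>m s) \<longrightarrow> s \<circ>\<^sub>m e \<circ>\<^sub>m pinv s \<circ>\<^sub>m e \<noteq> Map.empty}"

text \<open>Graph of a partial map; unions of partial maps are unions of graphs.\<close>
definition pgraph :: "('a \<rightharpoonup> 'a) \<Rightarrow> ('a \<times> 'a) set" where
  "pgraph m = {(x, y). m x = Some y}"

definition exhaustive_at :: "'a cat \<Rightarrow> 'a \<Rightarrow> 'a set \<Rightarrow> bool" where
  "exhaustive_at C x B \<longleftrightarrow> B \<subseteq> rideal C x \<and>
     (\<forall>a\<in>rideal C x. \<exists>b\<in>B. rideal C a \<inter> rideal C b \<noteq> {})"

definition exhaustive :: "'a cat \<Rightarrow> 'a set \<Rightarrow> bool" where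
  "exhaustive C B \<longleftrightarrow> (\<exists>x\<in>Obj C. exhaustive_at C x B)"

definition F_Lambda :: "'a cat \<Rightarrow> ('a \<rightharpoonup> 'a) set" where
  "F_Lambda C = {m. m \<in> S_Iso C \<and>
     (\<exists>(n::nat) a b. (\<forall>i<n. a i \<in> Mor C \<and> b i \<in> Mor C) \<and>
        exhaustive C (a ` {..<n}) \<and> exhaustive C (b ` {..<n}) \<and>
        pgraph m = (\<Union>i<n. pgraph (pmap C (a i) \<circ>\<^sub>m pinv (pmap C (b i)))))}
   \<union> {Map.empty}"

end

theory Submission
  imports Defs
begin

lemma pinv_SomeD: assumes "pinv m y = Some x" shows "m x = Some y"
proof -
  have ex: "\<exists>x. m x = Some y"
  proof (rule ccontr)
    assume "\<not> ?thesis" then have "pinv m y = None" unfolding pinv_def by simp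
    with assms show False by simp
  qed
  then have "x = (SOME x. m x = Some y)" using assms unfolding pinv_def by simp
  then show ?thesis using someI_ex[OF ex] by simp
qed

lemma pinv_SomeI: assumes "m x = Some y" "\<And>x'. m x' = Some y \<Longrightarrow> x' = x" shows "pinv m y = Some x"
proof -
  have "(SOME x. m x = Some y) = x" using assms by (intro some_equality)
  then show ?thesis using assms(1) unfolding pinv_def by auto
qed

lemma nonempty_map: "m \<noteq> Map.empty \<Longrightarrow> \<exists>x v. m x = Some v"
  by (metis not_None_eq ext)

locale lcat =
  fixes C :: "'a cat"
  assumes scat: "small_category C" and lcanc: "left_cancellative C"
begin

lemma rg_obj: "a \<in> Mor C \<Longrightarrow> rg C a \<in> Obj C" and sc_obj: "a \<in> Mor C \<Longrightarrow> sc C a \<in> Obj C"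
  using scat unfolding small_category_def by blast+

lemma obj_mor: "x \<in> Obj C \<Longrightarrow> x \<in> Mor C" using scat unfolding small_category_def by blast+

lemma obj_rg: "x \<in> Obj C \<Longrightarrow> rg C x = x" and obj_sc: "x \<in> Obj C \<Longrightarrow> sc C x = x"
  using scat unfolding small_category_def by blast+

lemma rg_mor[simp]: "a \<in> Mor C \<Longrightarrow> rg C a \<in> Mor C" and sc_mor[simp]: "a \<in> Mor C \<Longrightarrow> sc C a \<in> Mor C"
  using rg_obj sc_obj obj_mor by auto

lemma rg_rg[simp]: "a \<in> Mor C \<Longrightarrow> rg C (rg C a) = rg C a"
  and sc_rg[simp]: "a \<in> Mor C \<Longrightarrow> sc C (rg C a) = rg C a"
  and rg_sc[simp]: "a \<in> Mor C \<Longrightarrow> rg C (sc C a) = sc C a"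
  and sc_sc[simp]: "a \<in> Mor C \<Longrightarrow> sc C (sc C a) = sc C a"
  using rg_obj sc_obj obj_rg obj_sc by auto

lemma cmp_mor[simp]: "a \<in> Mor C \<Longrightarrow> b \<in> Mor C \<Longrightarrow> sc C a = rg C b \<Longrightarrow> cmp C a b \<in> Mor C"
  and rg_cmp[simp]: "a \<in> Mor C \<Longrightarrow> b \<in> Mor C \<Longrightarrow> sc C a = rg C b \<Longrightarrow> rg C (cmp C a b) = rg C a"
  and sc_cmp[simp]: "a \<in> Mor C \<Longrightarrow> b \<in> Mor C \<Longrightarrow> sc C a = rg C b \<Longrightarrow> sc C (cmp C a b) = sc C b"
  using scat unfolding small_category_def by blast+

lemma cmp_rg[simp]: "a \<in> Mor C \<Longrightarrow> cmp C (rg C a) a = a"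
  and cmp_sc[simp]: "a \<in> Mor C \<Longrightarrow> cmp C a (sc C a) = a"
  using scat unfolding small_category_def by blast+

lemma assoc: "a \<in> Mor C \<Longrightarrow> b \<in> Mor C \<Longrightarrow> c \<in> Mor C \<Longrightarrow> sc C a = rg C b \<Longrightarrow> sc C b = rg C c \<Longrightarrow>
   cmp C (cmp C a b) c = cmp C a (cmp C b c)"
  using scat unfolding small_category_def by blast+

lemma cancel: "a \<in> Mor C \<Longrightarrow> b \<in> Mor C \<Longrightarrow> c \<in> Mor C \<Longrightarrow> sc C a = rg C b \<Longrightarrow> sc C a = rg C c \<Longrightarrow>
   cmp C a b = cmp C a c \<longleftrightarrow> b = c"
  using lcanc unfolding left_cancellative_def by blast

lemma rideal_iff: "y \<in> rideal C a \<longleftrightarrow> (\<exists>b. b \<in> Mor C \<and> sc C a = rg C b \<and> y = cmp C a b)"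
  unfolding rideal_def by auto

lemma self_rideal: "a \<in> Mor C \<Longrightarrow> a \<in> rideal C a"
  unfolding rideal_iff by (rule exI[of _ "sc C a"]) auto

lemma rideal_obj: "x \<in> Obj C \<Longrightarrow> rideal C x = {b \<in> Mor C. rg C b = x}"
proof (intro equalityI subsetI)
  fix y assume x: "x \<in> Obj C" and "y \<in> rideal C x"
  then obtain b where "b \<in> Mor C" "sc C x = rg C b" "y = cmp C x b" unfolding rideal_iff by blast
  then show "y \<in> {b \<in> Mor C. rg C b = x}" using x obj_sc obj_mor by auto
next
  fix y assume x: "x \<in> Obj C" and "y \<in> {b \<in> Mor C. rg C b = x}"
  then have "y \<in> Mor C" "sc C x = rg C y" "y = cmp C x y" using obj_sc by auto
  then show "y \<in> rideal C x" unfolding rideal_iff by blast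
qed

lemma pmap_Some: "pmap C a g = Some h \<longleftrightarrow> g \<in> Mor C \<and> rg C g = sc C a \<and> h = cmp C a g"
  unfolding pmap_def by auto

lemma pinv_pmap_Some: "a \<in> Mor C \<Longrightarrow>
   pinv (pmap C a) y = Some g \<longleftrightarrow> g \<in> Mor C \<and> rg C g = sc C a \<and> y = cmp C a g"
proof
  assume "a \<in> Mor C" "pinv (pmap C a) y = Some g"
  then show "g \<in> Mor C \<and> rg C g = sc C a \<and> y = cmp C a g"
    using pinv_SomeD pmap_Some by metis
next
  assume a: "a \<in> Mor C" and h: "g \<in> Mor C \<and> rg C g = sc C a \<and> y = cmp C a g"
  show "pinv (pmap C a) y = Some g"
    by (rule pinv_SomeI) (use a h in \<open>auto simp: pmap_Some cancel\<close>)
qed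

lemma pq_Some: "P \<in> Mor C \<Longrightarrow> Q \<in> Mor C \<Longrightarrow> sc C P = sc C Q \<Longrightarrow>
  (pmap C P \<circ>\<^sub>m pinv (pmap C Q)) x = Some z \<longleftrightarrow>
   (\<exists>u. u \<in> Mor C \<and> rg C u = sc C Q \<and> x = cmp C Q u \<and> z = cmp C P u)"
  by (auto simp: map_comp_Some_iff pinv_pmap_Some pmap_Some)

definition inv_ok :: "('a \<rightharpoonup> 'a) \<Rightarrow> bool" where
  "inv_ok s \<longleftrightarrow> (\<forall>x y. s x = Some y \<longrightarrow> x \<in> Mor C \<and> y \<in> Mor C \<and> sc C x = sc C y \<and>
      (\<forall>t. t \<in> Mor C \<and> rg C t = sc C x \<longrightarrow> s (cmp C x t) = Some (cmp C y t))) \<and>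
     (\<forall>x x' y. s x = Some y \<longrightarrow> s x' = Some y \<longrightarrow> x = x')"

lemma S_inv_ok: "s \<in> S_Lambda C \<Longrightarrow> inv_ok s"
proof (induction rule: S_Lambda.induct)
  case (gen a)
  show ?case unfolding inv_ok_def
  proof (rule conjI; (intro allI impI)?)
    fix x y assume "pmap C a x = Some y"
    then have xy: "x \<in> Mor C" "rg C x = sc C a" "y = cmp C a x" unfolding pmap_Some by auto
    show "x \<in> Mor C \<and> y \<in> Mor C \<and> sc C x = sc C y \<and>
      (\<forall>t. t \<in> Mor C \<and> rg C t = sc C x \<longrightarrow> pmap C a (cmp C x t) = Some (cmp C y t))"
    proof (intro conjI allI impI)
      show "x \<in> Mor C" "y \<in> Mor C" "sc C x = sc C y" using xy gen by auto
      fix t assume t: "t \<in> Mor C \<and> rg C t = sc C x"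
      have "cmp C y t = cmp C a (cmp C x t)" using xy t gen assoc by auto
      then show "pmap C a (cmp C x t) = Some (cmp C y t)" unfolding pmap_Some using xy t by auto
    qed
  next
    fix x x' y assume "pmap C a x = Some y" "pmap C a x' = Some y"
    then show "x = x'" unfolding pmap_Some using gen cancel by metis
  qed
next
  case (mult s t)
  show ?case unfolding inv_ok_def
  proof (rule conjI; (intro allI impI)?)
    fix x y assume "(s \<circ>\<^sub>m t) x = Some y"
    then obtain k where k: "t x = Some k" "s k = Some y" by (auto simp: map_comp_Some_iff)
    show "x \<in> Mor C \<and> y \<in> Mor C \<and> sc C x = sc C y \<and>
      (\<forall>u. u \<in> Mor C \<and> rg C u = sc C x \<longrightarrow> (s \<circ>\<^sub>m t) (cmp C x u) = Some (cmp C y u))"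
    proof (intro conjI allI impI)
      show "x \<in> Mor C" "y \<in> Mor C" "sc C x = sc C y" using k mult.IH unfolding inv_ok_def by metis+
      fix u assume u: "u \<in> Mor C \<and> rg C u = sc C x"
      have "t (cmp C x u) = Some (cmp C k u)" using k(1) u mult.IH(2) unfolding inv_ok_def by blast
      moreover have "sc C x = sc C k" using k(1) mult.IH(2) unfolding inv_ok_def by blast
      then have "s (cmp C k u) = Some (cmp C y u)" using k(2) u mult.IH(1) unfolding inv_ok_def by auto
      ultimately show "(s \<circ>\<^sub>m t) (cmp C x u) = Some (cmp C y u)" by (simp add: map_comp_def)
    qed
  next
    fix x x' y assume "(s \<circ>\<^sub>m t) x = Some y" "(s \<circ>\<^sub>m t) x' = Some y"
    then obtain k k' where "t x = Some k" "s k = Some y" "t x' = Some k'" "s k' = Some y"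
      by (auto simp: map_comp_Some_iff)
    then show "x = x'" using mult.IH unfolding inv_ok_def by metis
  qed
next
  case (inv s)
  have h: "\<And>x y. s x = Some y \<Longrightarrow> x \<in> Mor C \<and> y \<in> Mor C \<and> sc C x = sc C y"
    and h1: "\<And>x y t. s x = Some y \<Longrightarrow> t \<in> Mor C \<Longrightarrow> rg C t = sc C x \<Longrightarrow> s (cmp C x t) = Some (cmp C y t)"
    and h2: "\<And>x x' y. s x = Some y \<Longrightarrow> s x' = Some y \<Longrightarrow> x = x'"
    using inv.IH unfolding inv_ok_def by blast+
  show ?case unfolding inv_ok_def
  proof (rule conjI; (intro allI impI)?)
    fix x y assume p: "pinv s x = Some y"
    from p have sy: "s y = Some x" by (rule pinv_SomeD)
    then have *: "x \<in> Mor C \<and> y \<in> Mor C \<and> sc C x = sc C y" using h by force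
    show "x \<in> Mor C \<and> y \<in> Mor C \<and> sc C x = sc C y \<and>
      (\<forall>t. t \<in> Mor C \<and> rg C t = sc C x \<longrightarrow> pinv s (cmp C x t) = Some (cmp C y t))"
    proof (intro conjI allI impI)
      show "x \<in> Mor C" "y \<in> Mor C" "sc C x = sc C y" using * by auto
      fix t assume t: "t \<in> Mor C \<and> rg C t = sc C x"
      have "s (cmp C y t) = Some (cmp C x t)" using h1[OF sy] t * by auto
      then show "pinv s (cmp C x t) = Some (cmp C y t)" using h2 by (intro pinv_SomeI) auto
    qed
  next
    fix x x' y assume "pinv s x = Some y" "pinv s x' = Some y"
    then have "s y = Some x" "s y = Some x'" by (auto dest: pinv_SomeD)
    then show "x = x'" by simp
  qed
qed

end

context lcat
begin

lemma inv_ok_idem: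
  assumes "inv_ok e" "e \<circ>\<^sub>m e = e" "e y = Some y'"
  shows "y' = y"
proof -
  have "(e \<circ>\<^sub>m e) y = Some y'" using assms by simp
  then obtain k where k: "e y = Some k" "e k = Some y'" by (auto simp: map_comp_Some_iff)
  then have "k = y'" using assms by simp
  with k assms(1) show ?thesis unfolding inv_ok_def by metis
qed

lemma key_setup:
  assumes fa: "finitely_aligned C"
    and mors: "\<alpha> \<in> Mor C" "\<beta> \<in> Mor C" "\<delta> \<in> Mor C" and scab: "sc C \<alpha> = sc C \<beta>"
    and iso: "pmap C \<alpha> \<circ>\<^sub>m pinv (pmap C \<beta>) \<in> S_Iso C"
    and sub: "rideal C \<delta> \<subseteq> rideal C \<alpha> \<inter> rideal C \<beta>"
    and a': "a' \<in> Mor C" "sc C \<alpha> = rg C a'" "\<delta> = cmp C \<alpha> a'"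
    and b': "b' \<in> Mor C" "sc C \<beta> = rg C b'" "\<delta> = cmp C \<beta> b'"
    and y: "y \<in> Mor C" "rg C y = sc C \<delta>"
  shows "\<exists>t t'. t \<in> Mor C \<and> t' \<in> Mor C \<and> rg C t = sc C y \<and> rg C t' = sc C y \<and>
           cmp C b' (cmp C y t') = cmp C a' (cmp C y t)"
proof -
  define s where "s = pmap C \<alpha> \<circ>\<^sub>m pinv (pmap C \<beta>)"
  define d where "d = cmp C \<delta> y"
  have scd: "sc C \<delta> = sc C a'" "sc C \<delta> = sc C b'" using a' b' mors by (metis sc_cmp)+
  have ya: "rg C y = sc C a'" and yb: "rg C y = sc C b'" using y scd by auto
  have da: "cmp C \<delta> v = cmp C \<alpha> (cmp C a' v)" if "v \<in> Mor C" "rg C v = sc C a'" for v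
  proof -
    have "cmp C \<delta> v = cmp C (cmp C \<alpha> a') v" using a'(3) by simp
    also have "\<dots> = cmp C \<alpha> (cmp C a' v)" using a'(1,2) mors that by (intro assoc) auto
    finally show ?thesis .
  qed
  have db: "cmp C \<delta> v = cmp C \<beta> (cmp C b' v)" if "v \<in> Mor C" "rg C v = sc C b'" for v
  proof -
    have "cmp C \<delta> v = cmp C (cmp C \<beta> b') v" using b'(3) by simp
    also have "\<dots> = cmp C \<beta> (cmp C b' v)" using b'(1,2) mors that by (intro assoc) auto
    finally show ?thesis .
  qed
  have d: "d \<in> Mor C" "sc C d = sc C y" using y mors d_def by auto
  have dt: "cmp C d t = cmp C \<delta> (cmp C y t)" if "t \<in> Mor C" "rg C t = sc C d" for t
    unfolding d_def using that d(2) y mors by (intro assoc) auto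
  define e where "e = pmap C d \<circ>\<^sub>m pinv (pmap C d)"
  have e_Some: "e z = Some z' \<longleftrightarrow> z' = z \<and> (\<exists>t. t \<in> Mor C \<and> rg C t = sc C d \<and> z = cmp C d t)" for z z'
    unfolding e_def using pq_Some[OF d(1) d(1)] by auto
  have s_Some: "s x = Some v \<longleftrightarrow> (\<exists>w. w \<in> Mor C \<and> rg C w = sc C \<beta> \<and> x = cmp C \<beta> w \<and> v = cmp C \<alpha> w)" for x v
    unfolding s_def using pq_Some[OF mors(1,2) scab] by simp
  have s_inj: "s x = Some v \<Longrightarrow> s x' = Some v \<Longrightarrow> x = x'" for x x' v
    unfolding s_Some using mors scab by (auto simp: cancel)
  have yt_b: "cmp C d t = cmp C \<beta> (cmp C b' (cmp C y t))" "cmp C y t \<in> Mor C" "rg C (cmp C y t) = sc C b'"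
    if "t \<in> Mor C" "rg C t = sc C d" for t
  proof -
    show m: "cmp C y t \<in> Mor C" "rg C (cmp C y t) = sc C b'" using that d(2) y(1) yb by auto
    show "cmp C d t = cmp C \<beta> (cmp C b' (cmp C y t))" using dt[OF that] db[OF m] by simp
  qed
  have yt_a: "cmp C d t = cmp C \<alpha> (cmp C a' (cmp C y t))" "rg C (cmp C y t) = sc C a'"
    if "t \<in> Mor C" "rg C t = sc C d" for t
  proof -
    show m: "rg C (cmp C y t) = sc C a'" using that d(2) y(1) ya by auto
    have "cmp C y t \<in> Mor C" using that d(2) y(1) by auto
    then show "cmp C d t = cmp C \<alpha> (cmp C a' (cmp C y t))" using dt[OF that] da m by simp
  qed
  have eS: "e \<in> S_Lambda C" unfolding e_def using d by (intro S_Lambda.intros)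
  have ee: "e \<circ>\<^sub>m e = e"
  proof
    fix z show "(e \<circ>\<^sub>m e) z = e z"
    proof (cases "e z")
      case None then show ?thesis by (simp add: map_comp_def)
    next
      case (Some z') then have "z' = z" using e_Some by blast
      with Some show ?thesis by (simp add: map_comp_def)
    qed
  qed
  have ne: "e \<noteq> Map.empty"
  proof
    assume "e = Map.empty"
    moreover have "e d = Some d" unfolding e_Some using d(1) by (intro conjI exI[of _ "sc C d"]) auto
    ultimately show False by simp
  qed
  have eproj: "e = e \<circ>\<^sub>m (pinv s \<circ>\<^sub>m s)"
  proof
    fix z show "e z = (e \<circ>\<^sub>m (pinv s \<circ>\<^sub>m s)) z"
    proof (cases "e z")
      case None
      show ?thesis
      proof (cases "(pinv s \<circ>\<^sub>m s) z")
        case None then show ?thesis using \<open>e z = None\<close> by (simp add: map_comp_def)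
      next
        case (Some k)
        then obtain u where "s z = Some u" "pinv s u = Some k" by (auto simp: map_comp_Some_iff)
        then have "k = z" using s_inj pinv_SomeD by metis
        then show ?thesis using Some by (simp add: map_comp_def)
      qed
    next
      case (Some z')
      then obtain t where t: "z' = z" "t \<in> Mor C" "rg C t = sc C d" "z = cmp C d t" using e_Some by blast
      have z: "z = cmp C \<beta> (cmp C b' (cmp C y t))" using t yt_b by simp
      have "cmp C b' (cmp C y t) \<in> Mor C" "rg C (cmp C b' (cmp C y t)) = sc C \<beta>"
        using yt_b[OF t(2,3)] b'(1,2) by auto
      then have sz: "s z = Some (cmp C \<alpha> (cmp C b' (cmp C y t)))"
        unfolding s_Some using z by blast
      then have "pinv s (cmp C \<alpha> (cmp C b' (cmp C y t))) = Some z"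
        using s_inj by (intro pinv_SomeI) auto
      with sz have "(pinv s \<circ>\<^sub>m s) z = Some z" by (simp add: map_comp_def)
      then show ?thesis by (simp add: map_comp_def)
    qed
  qed
  have "s \<circ>\<^sub>m e \<circ>\<^sub>m pinv s \<circ>\<^sub>m e \<noteq> Map.empty"
  proof -
    have "\<forall>e. e \<in> S_Lambda C \<and> e \<circ>\<^sub>m e = e \<and> e \<noteq> Map.empty
       \<and> e = e \<circ>\<^sub>m (pinv s \<circ>\<^sub>m s) \<longrightarrow> s \<circ>\<^sub>m e \<circ>\<^sub>m pinv s \<circ>\<^sub>m e \<noteq> Map.empty"
      using iso unfolding S_Iso_def s_def mem_Collect_eq by (rule conjunct2)
    then show ?thesis using eS ee ne eproj by simp
  qed
  then obtain x0 v where "(s \<circ>\<^sub>m e \<circ>\<^sub>m pinv s \<circ>\<^sub>m e) x0 = Some v" using nonempty_map by blast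
  then obtain k1 k2 k3 where k: "e x0 = Some k1" "pinv s k1 = Some k2" "e k2 = Some k3" "s k3 = Some v"
    by (auto simp: map_comp_Some_iff)
  from k(1) obtain t where t: "k1 = x0" "t \<in> Mor C" "rg C t = sc C d" "x0 = cmp C d t" using e_Some by blast
  from k(3) obtain t' where t': "k3 = k2" "t' \<in> Mor C" "rg C t' = sc C d" "k2 = cmp C d t'" using e_Some by blast
  from k(2) have "s k2 = Some k1" by (rule pinv_SomeD)
  then obtain w where w: "w \<in> Mor C" "rg C w = sc C \<beta>" "k2 = cmp C \<beta> w" "k1 = cmp C \<alpha> w"
    using s_Some by blast
  have "cmp C \<beta> w = cmp C \<beta> (cmp C b' (cmp C y t'))"
    using w t' yt_b[OF t'(2,3)] by simp
  then have w1: "w = cmp C b' (cmp C y t')"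
    using w yt_b[OF t'(2,3)] b'(1,2) mors by (subst (asm) cancel) auto
  have "cmp C \<alpha> w = cmp C \<alpha> (cmp C a' (cmp C y t))"
    using w t yt_a[OF t(2,3)] k(1) by simp
  then have "w = cmp C a' (cmp C y t)"
    using w yt_b[OF t(2,3)] yt_a[OF t(2,3)] a'(1,2) mors scab by (subst (asm) cancel) auto
  then show ?thesis using w1 t t' d(2) by auto
qed

end

context lcat
begin

lemma cancelD: "a \<in> Mor C \<Longrightarrow> b \<in> Mor C \<Longrightarrow> c \<in> Mor C \<Longrightarrow> sc C a = rg C b \<Longrightarrow> sc C a = rg C c \<Longrightarrow>
   cmp C a b = cmp C a c \<Longrightarrow> b = c"
  using cancel by blast

lemma assoc_eq: "a \<in> Mor C \<Longrightarrow> b \<in> Mor C \<Longrightarrow> c \<in> Mor C \<Longrightarrow> sc C a = rg C b \<Longrightarrow> sc C b = rg C c \<Longrightarrow>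
   f = cmp C a b \<Longrightarrow> cmp C f c = cmp C a (cmp C b c)"
  by (simp add: assoc)

lemma main:
  assumes fa: "finitely_aligned C"
    and mors: "\<alpha> \<in> Mor C" "\<beta> \<in> Mor C" and scab: "sc C \<alpha> = sc C \<beta>"
    and iso: "pmap C \<alpha> \<circ>\<^sub>m pinv (pmap C \<beta>) \<in> S_Iso C"
    and dm: "\<delta> \<in> Mor C"
    and sub: "rideal C \<delta> \<subseteq> rideal C \<alpha> \<inter> rideal C \<beta>"
  shows "(\<exists>(n::nat) ds as. (\<forall>i<n. ds i \<in> Mor C \<and> as i \<in> Mor C) \<and>
            exhaustive C (ds ` {..<n}) \<and> exhaustive C (as ` {..<n}) \<and>
            pgraph (pinv (pmap C \<delta>) \<circ>\<^sub>m pmap C \<alpha> \<circ>\<^sub>m pinv (pmap C \<beta>) \<circ>\<^sub>m pmap C \<delta>)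
              = (\<Union>i<n. pgraph (pmap C (ds i) \<circ>\<^sub>m pinv (pmap C (as i)))))
         \<and> (pinv (pmap C \<delta>) \<circ>\<^sub>m pmap C \<alpha> \<circ>\<^sub>m pinv (pmap C \<beta>) \<circ>\<^sub>m pmap C \<delta>) \<in> F_Lambda C"
proof -
  define m where "m = pinv (pmap C \<delta>) \<circ>\<^sub>m pmap C \<alpha> \<circ>\<^sub>m pinv (pmap C \<beta>) \<circ>\<^sub>m pmap C \<delta>"
  have "\<delta> \<in> rideal C \<alpha>" "\<delta> \<in> rideal C \<beta>" using sub self_rideal[OF dm] by auto
  then obtain a' b' where a': "a' \<in> Mor C" "sc C \<alpha> = rg C a'" "\<delta> = cmp C \<alpha> a'"
    and b': "b' \<in> Mor C" "sc C \<beta> = rg C b'" "\<delta> = cmp C \<beta> b'"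
    unfolding rideal_iff by blast
  have scd: "sc C \<delta> = sc C a'" "sc C \<delta> = sc C b'" using a' b' mors by (metis sc_cmp)+
  have da: "cmp C \<delta> v = cmp C \<alpha> (cmp C a' v)" if "v \<in> Mor C" "rg C v = sc C a'" for v
  proof -
    have "cmp C \<delta> v = cmp C (cmp C \<alpha> a') v" using a'(3) by simp
    also have "\<dots> = cmp C \<alpha> (cmp C a' v)" using a'(1,2) mors that by (intro assoc) auto
    finally show ?thesis .
  qed
  have db: "cmp C \<delta> v = cmp C \<beta> (cmp C b' v)" if "v \<in> Mor C" "rg C v = sc C b'" for v
  proof -
    have "cmp C \<delta> v = cmp C (cmp C \<beta> b') v" using b'(3) by simp
    also have "\<dots> = cmp C \<beta> (cmp C b' v)" using b'(1,2) mors that by (intro assoc) auto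
    finally show ?thesis .
  qed
  have K: "\<exists>t t'. t \<in> Mor C \<and> t' \<in> Mor C \<and> rg C t = sc C y \<and> rg C t' = sc C y \<and>
           cmp C b' (cmp C y t') = cmp C a' (cmp C y t)" if "y \<in> Mor C" "rg C y = sc C \<delta>" for y
    using key_setup[OF fa mors dm scab iso sub a' b' that] .
  have m_char: "m x = Some z \<longleftrightarrow> x \<in> Mor C \<and> z \<in> Mor C \<and> rg C x = sc C \<delta> \<and> rg C z = sc C \<delta> \<and>
      cmp C b' x = cmp C a' z" for x z
  proof
    assume "m x = Some z"
    then obtain k1 w k3 where k: "pmap C \<delta> x = Some k1" "pinv (pmap C \<beta>) k1 = Some w"
        "pmap C \<alpha> w = Some k3" "pinv (pmap C \<delta>) k3 = Some z"
      unfolding m_def by (auto simp: map_comp_Some_iff)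
    have x: "x \<in> Mor C" "rg C x = sc C \<delta>" "k1 = cmp C \<delta> x" using k(1) unfolding pmap_Some by auto
    have w: "w \<in> Mor C" "rg C w = sc C \<beta>" "k1 = cmp C \<beta> w" using k(2) unfolding pinv_pmap_Some[OF mors(2)] by auto
    have k3: "k3 = cmp C \<alpha> w" using k(3) unfolding pmap_Some by auto
    have z: "z \<in> Mor C" "rg C z = sc C \<delta>" "k3 = cmp C \<delta> z" using k(4) unfolding pinv_pmap_Some[OF dm] by auto
    have "cmp C \<beta> w = cmp C \<beta> (cmp C b' x)" using x w db[of x] scd(2) by simp
    then have w1: "w = cmp C b' x" using x w b'(1,2) mors scd(2) by (subst (asm) cancel) auto
    have "cmp C \<alpha> w = cmp C \<alpha> (cmp C a' z)" using z k3 da[of z] scd(1) by simp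
    then have "w = cmp C a' z" using z w a'(1,2) mors scd(1) scab by (subst (asm) cancel) auto
    then show "x \<in> Mor C \<and> z \<in> Mor C \<and> rg C x = sc C \<delta> \<and> rg C z = sc C \<delta> \<and> cmp C b' x = cmp C a' z"
      using x z w1 by auto
  next
    assume h: "x \<in> Mor C \<and> z \<in> Mor C \<and> rg C x = sc C \<delta> \<and> rg C z = sc C \<delta> \<and> cmp C b' x = cmp C a' z"
    define w where "w = cmp C b' x"
    have hx: "x \<in> Mor C" "rg C x = sc C \<delta>" using h by auto
    have w: "w \<in> Mor C" "rg C w = sc C \<beta>" unfolding w_def using hx b'(1,2) scd(2) by auto
    have d1: "cmp C \<delta> x = cmp C \<beta> w" using h db[of x] scd(2) w_def by simp
    have d2: "cmp C \<alpha> w = cmp C \<delta> z" using h da[of z] scd(1) w_def by simp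
    have "pmap C \<delta> x = Some (cmp C \<delta> x)" using h by (simp add: pmap_Some)
    moreover have "pinv (pmap C \<beta>) (cmp C \<delta> x) = Some w" using w d1 mors by (simp add: pinv_pmap_Some)
    moreover have "pmap C \<alpha> w = Some (cmp C \<alpha> w)" using w scab by (simp add: pmap_Some)
    moreover have "pinv (pmap C \<delta>) (cmp C \<alpha> w) = Some z" using h d2 dm by (simp add: pinv_pmap_Some)
    ultimately show "m x = Some z" unfolding m_def by (simp add: map_comp_def)
  qed
  have m_inj: "m x = Some z \<Longrightarrow> m x' = Some z \<Longrightarrow> x = x'" for x x' z
  proof -
    assume "m x = Some z" "m x' = Some z"
    then have h: "x \<in> Mor C" "x' \<in> Mor C" "rg C x = sc C \<delta>" "rg C x' = sc C \<delta>"
       "cmp C b' x = cmp C a' z" "cmp C b' x' = cmp C a' z"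
      unfolding m_char by blast+
    have "sc C b' = rg C x" "sc C b' = rg C x'" using h(3,4) scd(2) by auto
    from cancelD[OF b'(1) h(1,2) this] h(5,6) show "x = x'" by simp
  qed
  have "\<exists>F. finite F \<and> F \<subseteq> Mor C \<and> rideal C a' \<inter> rideal C b' = (\<Union>f\<in>F. rideal C f)"
    using fa a'(1) b'(1) unfolding finitely_aligned_def by (elim ballE) auto
  then obtain F where F: "finite F" "F \<subseteq> Mor C" "rideal C a' \<inter> rideal C b' = (\<Union>f\<in>F. rideal C f)"
    by (elim exE conjE)
  have inF: "f \<in> rideal C a' \<and> f \<in> rideal C b'" if "f \<in> F" for f
  proof -
    have "f \<in> Mor C" using that F(2) by auto
    then have "f \<in> (\<Union>f\<in>F. rideal C f)" using that self_rideal[of f] by blast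
    then have "f \<in> rideal C a' \<inter> rideal C b'" unfolding F(3)[symmetric] .
    then show ?thesis by simp
  qed
  have "\<forall>f\<in>F. \<exists>u. u \<in> Mor C \<and> sc C a' = rg C u \<and> f = cmp C a' u" using inF unfolding rideal_iff by blast
  from bchoice[OF this] obtain p where p': "\<forall>f\<in>F. p f \<in> Mor C \<and> sc C a' = rg C (p f) \<and> f = cmp C a' (p f)"
    by blast
  have p: "\<And>f. f \<in> F \<Longrightarrow> p f \<in> Mor C \<and> sc C a' = rg C (p f) \<and> f = cmp C a' (p f)" using p' by blast
  have "\<forall>f\<in>F. \<exists>u. u \<in> Mor C \<and> sc C b' = rg C u \<and> f = cmp C b' u" using inF unfolding rideal_iff by blast
  from bchoice[OF this] obtain q where q': "\<forall>f\<in>F. q f \<in> Mor C \<and> sc C b' = rg C (q f) \<and> f = cmp C b' (q f)"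
    by blast
  have q: "\<And>f. f \<in> F \<Longrightarrow> q f \<in> Mor C \<and> sc C b' = rg C (q f) \<and> f = cmp C b' (q f)" using q' by blast
  have scp: "sc C (p f) = sc C f" "sc C (q f) = sc C f" if "f \<in> F" for f
    using p[OF that] q[OF that] a'(1) b'(1) by (metis sc_cmp)+
  have pu: "cmp C f u = cmp C a' (cmp C (p f) u)" "cmp C f u = cmp C b' (cmp C (q f) u)"
    if "f \<in> F" "u \<in> Mor C" "sc C f = rg C u" for f u
  proof -
    have pf: "p f \<in> Mor C" "sc C a' = rg C (p f)" "f = cmp C a' (p f)" using p[OF that(1)] by auto
    have qf: "q f \<in> Mor C" "sc C b' = rg C (q f)" "f = cmp C b' (q f)" using q[OF that(1)] by auto
    have "sc C (p f) = rg C u" "sc C (q f) = rg C u" using scp[OF that(1)] that(3) by auto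
    then show "cmp C f u = cmp C a' (cmp C (p f) u)" "cmp C f u = cmp C b' (cmp C (q f) u)"
      using assoc_eq[OF a'(1) pf(1) that(2) pf(2) _ pf(3)] assoc_eq[OF b'(1) qf(1) that(2) qf(2) _ qf(3)] by auto
  qed
  have graph: "pgraph m = (\<Union>f\<in>F. pgraph (pmap C (p f) \<circ>\<^sub>m pinv (pmap C (q f))))"
  proof (intro equalityI subsetI)
    fix xz assume "xz \<in> pgraph m"
    then obtain x z where xz: "xz = (x, z)" "m x = Some z" unfolding pgraph_def by auto
    then have h: "x \<in> Mor C" "z \<in> Mor C" "rg C x = sc C \<delta>" "rg C z = sc C \<delta>" "cmp C b' x = cmp C a' z"
      unfolding m_char by auto
    have "cmp C a' z \<in> rideal C a'" unfolding rideal_iff using h(2,4) scd(1) by auto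
    moreover have "cmp C a' z \<in> rideal C b'" unfolding rideal_iff using h(1,3,5) scd(2) by (intro exI[of _ x]) auto
    ultimately have "cmp C a' z \<in> rideal C a' \<inter> rideal C b'" by blast
    then obtain f where "f \<in> F" "cmp C a' z \<in> rideal C f" unfolding F(3) by blast
    then obtain u where fu: "f \<in> F" "u \<in> Mor C" "sc C f = rg C u" "cmp C a' z = cmp C f u"
      unfolding rideal_iff by blast
    have fm: "f \<in> Mor C" using fu F by auto
    have "cmp C a' z = cmp C a' (cmp C (p f) u)" using fu pu[OF fu(1-3)] by simp
    then have zz: "z = cmp C (p f) u" using fu p[OF fu(1)] scp[OF fu(1)] a'(1,2) h scd(1) by (subst (asm) cancel) auto
    have "cmp C b' x = cmp C b' (cmp C (q f) u)" using fu pu[OF fu(1-3)] h(5) by simp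
    then have xx: "x = cmp C (q f) u" using fu q[OF fu(1)] scp[OF fu(1)] b'(1,2) h scd(2) by (subst (asm) cancel) auto
    have "(pmap C (p f) \<circ>\<^sub>m pinv (pmap C (q f))) x = Some z"
      using pq_Some[of "p f" "q f"] p[OF fu(1)] q[OF fu(1)] scp[OF fu(1)] fu xx zz by auto
    then show "xz \<in> (\<Union>f\<in>F. pgraph (pmap C (p f) \<circ>\<^sub>m pinv (pmap C (q f))))"
      using fu xz unfolding pgraph_def by auto
  next
    fix xz assume "xz \<in> (\<Union>f\<in>F. pgraph (pmap C (p f) \<circ>\<^sub>m pinv (pmap C (q f))))"
    then obtain f x z where f: "f \<in> F" "xz = (x, z)" "(pmap C (p f) \<circ>\<^sub>m pinv (pmap C (q f))) x = Some z"
      unfolding pgraph_def by auto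
    then obtain u where u: "u \<in> Mor C" "rg C u = sc C (q f)" "x = cmp C (q f) u" "z = cmp C (p f) u"
      using pq_Some[of "p f" "q f"] p[OF f(1)] q[OF f(1)] scp[OF f(1)] by auto
    have "sc C f = rg C u" using u(2) scp[OF f(1)] by simp
    then have "cmp C b' x = cmp C a' z" using pu[OF f(1) u(1)] u(3,4) by simp
    moreover have "x \<in> Mor C" "rg C x = sc C \<delta>"
      using u q[OF f(1)] scp[OF f(1)] scd(2) by auto
    moreover have "z \<in> Mor C" "rg C z = sc C \<delta>"
      using u p[OF f(1)] scp[OF f(1)] scd(1) by auto
    ultimately have "m x = Some z" unfolding m_char by auto
    then show "xz \<in> pgraph m" using f unfolding pgraph_def by auto
  qed
  have exh: "\<exists>f\<in>F. rideal C \<mu> \<inter> rideal C (p f) \<noteq> {} \<and> rideal C \<mu> \<inter> rideal C (q f) \<noteq> {}"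
    if mu: "\<mu> \<in> Mor C" "rg C \<mu> = sc C \<delta>" for \<mu>
  proof -
    obtain t t' where t: "t \<in> Mor C" "t' \<in> Mor C" "rg C t = sc C \<mu>" "rg C t' = sc C \<mu>"
      "cmp C b' (cmp C \<mu> t') = cmp C a' (cmp C \<mu> t)" using K[OF mu] by blast
    have "cmp C a' (cmp C \<mu> t) \<in> rideal C a' \<inter> rideal C b'"
    proof -
      have "cmp C \<mu> t \<in> Mor C" "rg C (cmp C \<mu> t) = sc C a'" using t mu scd(1) by auto
      moreover have "cmp C \<mu> t' \<in> Mor C" "rg C (cmp C \<mu> t') = sc C b'" using t mu scd(2) by auto
      ultimately have "cmp C a' (cmp C \<mu> t) \<in> rideal C a'" "cmp C a' (cmp C \<mu> t) \<in> rideal C b'"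
        unfolding rideal_iff using t(5) by (metis)+
      then show ?thesis by blast
    qed
    then obtain f where "f \<in> F" "cmp C a' (cmp C \<mu> t) \<in> rideal C f" unfolding F(3) by blast
    then obtain u where fu: "f \<in> F" "u \<in> Mor C" "sc C f = rg C u" "cmp C a' (cmp C \<mu> t) = cmp C f u"
      unfolding rideal_iff by blast
    have "cmp C a' (cmp C \<mu> t) = cmp C a' (cmp C (p f) u)" using fu pu[OF fu(1-3)] by simp
    then have e1: "cmp C \<mu> t = cmp C (p f) u" using fu p[OF fu(1)] scp[OF fu(1)] a'(1,2) t mu scd(1) by (subst (asm) cancel) auto
    have "cmp C b' (cmp C \<mu> t') = cmp C b' (cmp C (q f) u)" using fu pu[OF fu(1-3)] t(5) by simp
    then have e2: "cmp C \<mu> t' = cmp C (q f) u" using fu q[OF fu(1)] scp[OF fu(1)] b'(1,2) t mu scd(2) by (subst (asm) cancel) auto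
    have "sc C (p f) = rg C u" "sc C (q f) = rg C u" using scp[OF fu(1)] fu(3) by auto
    then have "cmp C \<mu> t \<in> rideal C \<mu>" "cmp C \<mu> t \<in> rideal C (p f)"
      "cmp C \<mu> t' \<in> rideal C \<mu>" "cmp C \<mu> t' \<in> rideal C (q f)"
      unfolding rideal_iff using e1 e2 t fu(2) by auto
    then have "cmp C \<mu> t \<in> rideal C \<mu> \<inter> rideal C (p f)" "cmp C \<mu> t' \<in> rideal C \<mu> \<inter> rideal C (q f)"
      by blast+
    then show ?thesis using fu by blast
  qed
  have o: "sc C \<delta> \<in> Obj C" using dm by (rule sc_obj)
  have exP: "exhaustive C (p ` F)"
  proof -
    have "exhaustive_at C (sc C \<delta>) (p ` F)"
      unfolding exhaustive_at_def rideal_obj[OF o]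
    proof (intro conjI subsetI ballI)
      fix g assume "g \<in> p ` F" then obtain f where "f \<in> F" "g = p f" by auto
      then show "g \<in> {b \<in> Mor C. rg C b = sc C \<delta>}" using p[of f] scd(1) by auto
    next
      fix \<mu> assume "\<mu> \<in> {b \<in> Mor C. rg C b = sc C \<delta>}"
      then obtain f where "f \<in> F" "rideal C \<mu> \<inter> rideal C (p f) \<noteq> {}" using exh by blast
      then show "\<exists>b\<in>p ` F. rideal C \<mu> \<inter> rideal C b \<noteq> {}" by blast
    qed
    then show ?thesis using o unfolding exhaustive_def by blast
  qed
  have exQ: "exhaustive C (q ` F)"
  proof -
    have "exhaustive_at C (sc C \<delta>) (q ` F)"
      unfolding exhaustive_at_def rideal_obj[OF o]
    proof (intro conjI subsetI ballI)
      fix g assume "g \<in> q ` F" then obtain f where "f \<in> F" "g = q f" by auto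
      then show "g \<in> {b \<in> Mor C. rg C b = sc C \<delta>}" using q[of f] scd(2) by auto
    next
      fix \<mu> assume "\<mu> \<in> {b \<in> Mor C. rg C b = sc C \<delta>}"
      then obtain f where "f \<in> F" "rideal C \<mu> \<inter> rideal C (q f) \<noteq> {}" using exh by blast
      then show "\<exists>b\<in>q ` F. rideal C \<mu> \<inter> rideal C b \<noteq> {}" by blast
    qed
    then show ?thesis using o unfolding exhaustive_def by blast
  qed
  obtain fs where fs: "set fs = F" using F(1) finite_list by blast
  define n where "n = length fs"
  define ds where "ds = (\<lambda>i. p (fs ! i))"
  define as where "as = (\<lambda>i. q (fs ! i))"
  have img: "(\<lambda>i. fs ! i) ` {..<n} = F"
  proof -
    have "nth fs ` {0..<length fs} = set (take (length fs) fs)" by (rule nth_image) simp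
    then show ?thesis using fs unfolding n_def by (simp add: atLeast0LessThan)
  qed
  have dsimg: "ds ` {..<n} = p ` F" unfolding img[symmetric] image_image ds_def ..
  have asimg: "as ` {..<n} = q ` F" unfolding img[symmetric] image_image as_def ..
  have uni: "(\<Union>i<n. pgraph (pmap C (ds i) \<circ>\<^sub>m pinv (pmap C (as i))))
      = (\<Union>f\<in>F. pgraph (pmap C (p f) \<circ>\<^sub>m pinv (pmap C (q f))))"
    unfolding img[symmetric] image_image ds_def as_def ..
  have pm: "p f \<in> Mor C" "q f \<in> Mor C" if "f \<in> F" for f using p[OF that] q[OF that] by blast+
  have mors_i: "\<forall>i<n. ds i \<in> Mor C \<and> as i \<in> Mor C"
  proof (intro allI impI)
    fix i assume "i < n"
    then have "fs ! i \<in> F" using fs n_def nth_mem by blast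
    then show "ds i \<in> Mor C \<and> as i \<in> Mor C" unfolding ds_def as_def using pm by blast
  qed
  have EX: "\<exists>(n::nat) ds as. (\<forall>i<n. ds i \<in> Mor C \<and> as i \<in> Mor C) \<and>
            exhaustive C (ds ` {..<n}) \<and> exhaustive C (as ` {..<n}) \<and>
            pgraph m = (\<Union>i<n. pgraph (pmap C (ds i) \<circ>\<^sub>m pinv (pmap C (as i))))"
    apply (rule exI[of _ n], rule exI[of _ ds], rule exI[of _ as])
    unfolding dsimg asimg uni graph using mors_i exP exQ by blast
  have mS: "m \<in> S_Lambda C" unfolding m_def using mors dm by (intro S_Lambda.intros)
  have mIso: "m \<in> S_Iso C" unfolding S_Iso_def
  proof (intro CollectI conjI mS allI impI)
    fix e assume he: "e \<in> S_Lambda C \<and> e \<circ>\<^sub>m e = e \<and> e \<noteq> Map.empty \<and> e = e \<circ>\<^sub>m (pinv m \<circ>\<^sub>m m)"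
    have eok: "inv_ok e" using he S_inv_ok by blast
    have ee: "e \<circ>\<^sub>m e = e" and ene: "e \<noteq> Map.empty" and eproj: "e = e \<circ>\<^sub>m (pinv m \<circ>\<^sub>m m)"
      using he by blast+
    have eok1: "\<And>x y t. e x = Some y \<Longrightarrow> t \<in> Mor C \<Longrightarrow> rg C t = sc C x \<Longrightarrow> e (cmp C x t) = Some (cmp C y t)"
      using eok unfolding inv_ok_def by blast
    obtain y0 y1 where ey1: "e y0 = Some y1" using ene nonempty_map by blast
    have "y1 = y0" by (rule inv_ok_idem[OF eok ee ey1])
    then have ey: "e y0 = Some y0" using ey1 by simp
    from ey have "(e \<circ>\<^sub>m (pinv m \<circ>\<^sub>m m)) y0 = Some y0" by (subst eproj[symmetric])
    then obtain k v where "m y0 = Some v" by (auto simp: map_comp_Some_iff)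
    then have y0: "y0 \<in> Mor C" "rg C y0 = sc C \<delta>" unfolding m_char by blast+
    obtain t t' where t: "t \<in> Mor C" "t' \<in> Mor C" "rg C t = sc C y0" "rg C t' = sc C y0"
      "cmp C b' (cmp C y0 t') = cmp C a' (cmp C y0 t)" using K[OF y0] by blast
    have e1: "e (cmp C y0 t) = Some (cmp C y0 t)" by (rule eok1[OF ey t(1) t(3)])
    have e2: "e (cmp C y0 t') = Some (cmp C y0 t')" by (rule eok1[OF ey t(2) t(4)])
    have mt: "m (cmp C y0 t') = Some (cmp C y0 t)" unfolding m_char using t y0 by auto
    have pm: "pinv m (cmp C y0 t) = Some (cmp C y0 t')"
      by (rule pinv_SomeI[of m "cmp C y0 t'" "cmp C y0 t", OF mt], rule m_inj[OF _ mt])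
    have "(m \<circ>\<^sub>m e \<circ>\<^sub>m pinv m \<circ>\<^sub>m e) (cmp C y0 t) = Some (cmp C y0 t)"
      using e1 e2 pm mt by (simp add: map_comp_def)
    then show "m \<circ>\<^sub>m e \<circ>\<^sub>m pinv m \<circ>\<^sub>m e \<noteq> Map.empty" by auto
  qed
  have mF: "m \<in> F_Lambda C" unfolding F_Lambda_def by (rule UnI1, rule CollectI, rule conjI[OF mIso EX])
  show ?thesis using EX mF unfolding m_def by (rule conjI)
qed

end

theorem lemma4p9:
  fixes C :: "'a cat" and \<alpha> \<beta> \<delta> :: 'a
  assumes "small_category C" and "left_cancellative C" and "finitely_aligned C"
    and "\<alpha> \<in> Mor C" and "\<beta> \<in> Mor C" and "sc C \<alpha> = sc C \<beta>"
    and "pmap C \<alpha> \<circ>\<^sub>m pinv (pmap C \<beta>) \<in> S_Iso C"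
    and "\<delta> \<in> Mor C" and "rideal C \<delta> \<subseteq> rideal C \<alpha> \<inter> rideal C \<beta>"
  shows "(\<exists>(n::nat) ds as. (\<forall>i<n. ds i \<in> Mor C \<and> as i \<in> Mor C) \<and>
            exhaustive C (ds ` {..<n}) \<and> exhaustive C (as ` {..<n}) \<and>
            pgraph (pinv (pmap C \<delta>) \<circ>\<^sub>m pmap C \<alpha> \<circ>\<^sub>m pinv (pmap C \<beta>) \<circ>\<^sub>m pmap C \<delta>)
              = (\<Union>i<n. pgraph (pmap C (ds i) \<circ>\<^sub>m pinv (pmap C (as i)))))
         \<and> (pinv (pmap C \<delta>) \<circ>\<^sub>m pmap C \<alpha> \<circ>\<^sub>m pinv (pmap C \<beta>) \<circ>\<^sub>m pmap C \<delta>) \<in> F_Lambda C"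
proof -
  interpret lcat C using assms(1,2) by (rule lcat.intro)
  show ?thesis using main[OF assms(3,4,5,6,7,8,9)] .
qed

end
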